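(* Suppose $N>n$. Then: (i) $r^{(2)}\ge\frac nN+\sqrt{\frac{n(N-n)}{N^2(N-1)}}$. (ii) If there exists a $2$-uniform $(N,n)$ dual pair for $\mathcal H$, then (a) $r^{(2)}=\frac nN+\sqrt{\frac{n(N-n)}{N^2(N-1)}}$, and (b) an $(N,n)$ dual pair $(F,G)$ belongs to $\mathcal R^{(2)}$ if and only if $(F,G)$ is $2$-uniform.
   Context: $\mathcal H$ is a complex Hilbert space of finite dimension $n$, inner product linear in the first argument. A finite sequence $F=\{f_i\}_{i=1}^N$ is a frame if there are $0<A\le B$ with $A\|f\|^2\le\sum_i|\langle f,f_i\rangle|^2\le B\|f\|^2$ for all $f$. $G=\{g_i\}_{i=1}^N$ is a dual of $F$ if $f=\sum_i\langle f,g_i\rangle f_i$ for all $f$; $(F,G)$ is then an $(N,n)$ dual pair. A dual pair is $1$-uniform if $\langle f_i,g_i\rangle$ is independent of $i$, and $2$-uniform if it is $1$-uniform and $\langle f_i,g_j\rangle\langle f_j,g_i\rangle$ is the same constant for all $i\ne j$. $\mathcal A_m$ is the set of $m$-element subsets of $\{1,\dots,N\}$; $E_{\Lambda,F,G}f=\sum_{i\in\Lambda}\langle f,f_i\rangle g_i$; $\rho$ is spectral radius; $r^{(m)}_{F,G}=\max_{\Lambda\in\mathcal A_m}\rho(E_{\Lambda,F,G})$; $r^{(1)}=\inf\{r^{(1)}_{F,G}:(F,G)\text{ an }(N,n)\text{ dual pair}\}$; $\mathcal R^{(1)}=\{(F,G):r^{(1)}_{F,G}=r^{(1)}\}$; $r^{(2)}=\inf\{r^{(2)}_{F,G}:(F,G)\in\mathcal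 R^{(1)}\}$; $\mathcal R^{(2)}=\{(F,G)\in\mathcal R^{(1)}:r^{(2)}_{F,G}=r^{(2)}\}$. *)

theory Defs
  imports Complex_Main "Jordan_Normal_Form.Spectral_Radius"
begin

text \<open>The n-dimensional complex Hilbert space is modelled as complex column vectors of
  length n (carrier_vec n) with inner product  inner f g = f \<bullet>c g = sum_k f_k * cnj (g_k),
  linear in the first argument. Finite sequences {f_i}, i = 1..N, are functions
  F :: nat => complex vec, indexed by i in {0..<N}.\<close>

definition hinner :: "complex vec \<Rightarrow> complex vec \<Rightarrow> complex" where
  "hinner f g = f \<bullet>c g"

definition hnorm2 :: "complex vec \<Rightarrow> real" where
  "hnorm2 f = Re (hinner f f)"

definition is_frame :: "nat \<Rightarrow> nat \<Rightarrow> (nat \<Rightarrow> complex vec) \<Rightarrow> bool" where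
  "is_frame N n F \<longleftrightarrow> (\<forall>i<N. F i \<in> carrier_vec n) \<and>
     (\<exists>A B. 0 < A \<and> A \<le> B \<and>
        (\<forall>f \<in> carrier_vec n.
            A * hnorm2 f \<le> (\<Sum>i<N. (cmod (hinner f (F i)))\<^sup>2) \<and>
            (\<Sum>i<N. (cmod (hinner f (F i)))\<^sup>2) \<le> B * hnorm2 f))"

definition is_dual :: "nat \<Rightarrow> nat \<Rightarrow> (nat \<Rightarrow> complex vec) \<Rightarrow> (nat \<Rightarrow> complex vec) \<Rightarrow> bool" where
  "is_dual N n F G \<longleftrightarrow> (\<forall>i<N. G i \<in> carrier_vec n) \<and>
     (\<forall>f \<in> carrier_vec n. f = vec n (\<lambda>k. \<Sum>i<N. hinner f (G i) * (F i $ k)))"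

definition dual_pair :: "nat \<Rightarrow> nat \<Rightarrow> (nat \<Rightarrow> complex vec) \<Rightarrow> (nat \<Rightarrow> complex vec) \<Rightarrow> bool" where
  "dual_pair N n F G \<longleftrightarrow> is_frame N n F \<and> is_dual N n F G"

definition uniform1 :: "nat \<Rightarrow> (nat \<Rightarrow> complex vec) \<Rightarrow> (nat \<Rightarrow> complex vec) \<Rightarrow> bool" where
  "uniform1 N F G \<longleftrightarrow> (\<exists>c. \<forall>i<N. hinner (F i) (G i) = c)"

definition uniform2 :: "nat \<Rightarrow> (nat \<Rightarrow> complex vec) \<Rightarrow> (nat \<Rightarrow> complex vec) \<Rightarrow> bool" where
  "uniform2 N F G \<longleftrightarrow> uniform1 N F G \<and>
     (\<exists>d. \<forall>i<N. \<forall>j<N. i \<noteq> j \<longrightarrow> hinner (F i) (G j) * hinner (F j) (G i) = d)"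

text \<open>Matrix of E_{Lambda,F,G} f = sum_{i in Lambda} <f, f_i> g_i
  (its (j,k) entry is sum_{i in Lambda} (g_i)_j * cnj ((f_i)_k)).\<close>
definition E_op :: "nat \<Rightarrow> nat set \<Rightarrow> (nat \<Rightarrow> complex vec) \<Rightarrow> (nat \<Rightarrow> complex vec) \<Rightarrow> complex mat" where
  "E_op n \<Lambda> F G = mat n n (\<lambda>(j,k). \<Sum>i\<in>\<Lambda>. (G i $ j) * cnj (F i $ k))"

definition subsets_m :: "nat \<Rightarrow> nat \<Rightarrow> nat set set" where
  "subsets_m N m = {\<Lambda>. \<Lambda> \<subseteq> {0..<N} \<and> card \<Lambda> = m}"

definition r_FG :: "nat \<Rightarrow> nat \<Rightarrow> nat \<Rightarrow> (nat \<Rightarrow> complex vec) \<Rightarrow> (nat \<Rightarrow> complex vec) \<Rightarrow> real" where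
  "r_FG N n m F G = Max ((\<lambda>\<Lambda>. spectral_radius (E_op n \<Lambda> F G)) ` subsets_m N m)"

definition r1 :: "nat \<Rightarrow> nat \<Rightarrow> real" where
  "r1 N n = Inf {r_FG N n 1 F G | F G. dual_pair N n F G}"

definition R1 :: "nat \<Rightarrow> nat \<Rightarrow> ((nat \<Rightarrow> complex vec) \<times> (nat \<Rightarrow> complex vec)) set" where
  "R1 N n = {(F, G). dual_pair N n F G \<and> r_FG N n 1 F G = r1 N n}"

definition r2 :: "nat \<Rightarrow> nat \<Rightarrow> real" where
  "r2 N n = Inf {r_FG N n 2 F G | F G. (F, G) \<in> R1 N n}"

definition R2 :: "nat \<Rightarrow> nat \<Rightarrow> ((nat \<Rightarrow> complex vec) \<times> (nat \<Rightarrow> complex vec)) set" where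
  "R2 N n = {(F, G). (F, G) \<in> R1 N n \<and> r_FG N n 2 F G = r2 N n}"

end

theory Submission
  imports Defs
begin


lemma hinner_sum: assumes "g \<in> carrier_vec n"
  shows "hinner f g = (\<Sum>k<n. f $ k * cnj (g $ k))"
  using assms unfolding hinner_def scalar_prod_def
  by (auto intro!: sum.cong simp: atLeast0LessThan)

lemma hinner_cnj: assumes "f \<in> carrier_vec n" "g \<in> carrier_vec n"
  shows "hinner f g = cnj (hinner g f)"
  using assms by (simp add: hinner_sum[of _ n] mult.commute)

lemma E_mult: assumes "v \<in> carrier_vec n" "\<And>i. i \<in> \<Lambda> \<Longrightarrow> F i \<in> carrier_vec n" "finite \<Lambda>"
  shows "E_op n \<Lambda> F G *\<^sub>v v = vec n (\<lambda>j. \<Sum>i\<in>\<Lambda>. hinner v (F i) * G i $ j)"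
proof (rule eq_vecI)
  fix j assume j: "j < dim_vec (vec n (\<lambda>j. \<Sum>i\<in>\<Lambda>. hinner v (F i) * G i $ j))"
  hence j: "j < n" by simp
  have "(E_op n \<Lambda> F G *\<^sub>v v) $ j = (\<Sum>k<n. (\<Sum>i\<in>\<Lambda>. G i $ j * cnj (F i $ k)) * v $ k)"
    using j assms(1) unfolding E_op_def mult_mat_vec_def scalar_prod_def
    by (auto intro!: sum.cong simp: atLeast0LessThan)
  also have "\<dots> = (\<Sum>i\<in>\<Lambda>. (\<Sum>k<n. v $ k * cnj (F i $ k)) * G i $ j)"
    by (simp add: sum_distrib_left sum_distrib_right sum.swap[of _ \<Lambda>] mult_ac)
  also have "\<dots> = (\<Sum>i\<in>\<Lambda>. hinner v (F i) * G i $ j)"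
    using assms(2) by (auto intro!: sum.cong simp: hinner_sum[of _ n])
  finally show "(E_op n \<Lambda> F G *\<^sub>v v) $ j = vec n (\<lambda>j. \<Sum>i\<in>\<Lambda>. hinner v (F i) * G i $ j) $ j"
    using j by simp
qed (simp add: E_op_def)



lemma hinner_vec_lin: assumes "g \<in> carrier_vec n" "\<And>i. i \<in> \<Lambda> \<Longrightarrow> G i \<in> carrier_vec n"
  shows "hinner (vec n (\<lambda>k. \<Sum>i\<in>\<Lambda>. a i * G i $ k)) g = (\<Sum>i\<in>\<Lambda>. a i * hinner (G i) g)"
proof -
  have "hinner (vec n (\<lambda>k. \<Sum>i\<in>\<Lambda>. a i * G i $ k)) g = (\<Sum>k<n. (\<Sum>i\<in>\<Lambda>. a i * G i $ k) * cnj (g $ k))"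
    using assms by (simp add: hinner_sum[of _ n])
  also have "\<dots> = (\<Sum>i\<in>\<Lambda>. a i * (\<Sum>k<n. G i $ k * cnj (g $ k)))"
    by (simp add: sum_distrib_left sum_distrib_right sum.swap[of _ \<Lambda>] mult_ac)
  also have "\<dots> = (\<Sum>i\<in>\<Lambda>. a i * hinner (G i) g)"
    using assms by (auto intro!: sum.cong simp: hinner_sum[of _ n])
  finally show ?thesis .
qed

lemma EV1:
  assumes ev: "eigenvector (E_op n \<Lambda> F G) v lam"
    and FC: "\<And>i. i \<in> \<Lambda> \<Longrightarrow> F i \<in> carrier_vec n" and GC: "\<And>i. i \<in> \<Lambda> \<Longrightarrow> G i \<in> carrier_vec n"
    and fin: "finite \<Lambda>"
  shows "\<And>l. F l \<in> carrier_vec n \<Longrightarrow> lam * hinner v (F l) = (\<Sum>i\<in>\<Lambda>. hinner v (F i) * hinner (G i) (F l))"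
    and "lam \<noteq> 0 \<Longrightarrow> \<exists>i\<in>\<Lambda>. hinner v (F i) \<noteq> 0"
proof -
  have v: "v \<in> carrier_vec n" and v0: "v \<noteq> 0\<^sub>v n" and Ev: "E_op n \<Lambda> F G *\<^sub>v v = lam \<cdot>\<^sub>v v"
    using ev unfolding eigenvector_def by (auto simp: E_op_def)
  have eq: "lam \<cdot>\<^sub>v v = vec n (\<lambda>k. \<Sum>i\<in>\<Lambda>. hinner v (F i) * G i $ k)"
    using Ev E_mult[OF v FC fin] by simp
  {
    fix l assume Fl: "F l \<in> carrier_vec n"
    have "lam * hinner v (F l) = hinner (lam \<cdot>\<^sub>v v) (F l)"
      using v Fl by (simp add: hinner_sum[of _ n] sum_distrib_left mult_ac)
    also have "\<dots> = (\<Sum>i\<in>\<Lambda>. hinner v (F i) * hinner (G i) (F l))"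
      unfolding eq by (rule hinner_vec_lin[OF Fl GC])
    finally show "lam * hinner v (F l) = (\<Sum>i\<in>\<Lambda>. hinner v (F i) * hinner (G i) (F l))" .
  }
  assume l0: "lam \<noteq> 0"
  show "\<exists>i\<in>\<Lambda>. hinner v (F i) \<noteq> 0"
  proof (rule ccontr)
    assume "\<not> ?thesis"
    hence "lam \<cdot>\<^sub>v v = 0\<^sub>v n" unfolding eq by (auto intro!: eq_vecI)
    hence z: "lam \<cdot>\<^sub>v v = 0\<^sub>v n" .
    have "v = 0\<^sub>v n"
    proof (rule eq_vecI)
      fix i assume i: "i < dim_vec (0\<^sub>v n :: complex vec)"
      hence "(lam \<cdot>\<^sub>v v) $ i = 0" using z by simp
      thus "v $ i = 0\<^sub>v n $ i" using i v l0 by simp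
    qed (use v in simp)
    thus False using v0 by simp
  qed
qed

lemma EV2:
  assumes FC: "\<And>i. i \<in> \<Lambda> \<Longrightarrow> F i \<in> carrier_vec n" and GC: "\<And>i. i \<in> \<Lambda> \<Longrightarrow> G i \<in> carrier_vec n"
    and fin: "finite \<Lambda>" and l0: "lam \<noteq> 0"
    and eqs: "\<And>l. l \<in> \<Lambda> \<Longrightarrow> (\<Sum>i\<in>\<Lambda>. a i * hinner (G i) (F l)) = lam * a l"
    and nz: "jj \<in> \<Lambda>" "a jj \<noteq> 0"
  shows "lam \<in> spectrum (E_op n \<Lambda> F G)"
proof -
  define v where "v = vec n (\<lambda>k. \<Sum>i\<in>\<Lambda>. a i * G i $ k)"
  have v: "v \<in> carrier_vec n" unfolding v_def by simp
  have hv: "hinner v (F l) = lam * a l" if "l \<in> \<Lambda>" for l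
    unfolding v_def using hinner_vec_lin[OF FC[OF that], of \<Lambda> G a] GC eqs[OF that] by simp
  have "E_op n \<Lambda> F G *\<^sub>v v = vec n (\<lambda>k. \<Sum>i\<in>\<Lambda>. hinner v (F i) * G i $ k)"
    by (rule E_mult[OF v FC fin])
  also have "\<dots> = lam \<cdot>\<^sub>v v"
    unfolding v_def by (rule eq_vecI) (auto simp: hv[unfolded v_def] sum_distrib_left mult_ac intro!: sum.cong)
  finally have Ev: "E_op n \<Lambda> F G *\<^sub>v v = lam \<cdot>\<^sub>v v" .
  have "v \<noteq> 0\<^sub>v n"
  proof
    assume "v = 0\<^sub>v n"
    hence "hinner v (F jj) = 0" using FC[OF nz(1)] by (simp add: hinner_sum[of _ n])
    thus False using hv[OF nz(1)] l0 nz(2) by simp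
  qed
  thus ?thesis using v Ev unfolding spectrum_def eigenvalue_def eigenvector_def
    by (auto simp: E_op_def)
qed



lemma dualD: assumes "dual_pair N n F G"
  shows "\<And>i. i < N \<Longrightarrow> F i \<in> carrier_vec n" "\<And>i. i < N \<Longrightarrow> G i \<in> carrier_vec n"
   "\<And>f. f \<in> carrier_vec n \<Longrightarrow> f = vec n (\<lambda>k. \<Sum>i<N. hinner f (G i) * (F i $ k))"
  using assms unfolding dual_pair_def is_frame_def is_dual_def by auto

lemma trace_id: assumes "dual_pair N n F G"
  shows "(\<Sum>i<N. hinner (F i) (G i)) = of_nat n"
proof -
  note D = dualD[OF assms]
  have one: "(\<Sum>i<N. F i $ k * cnj (G i $ k)) = 1" if k: "k < n" for k
  proof -
    have hu: "hinner (unit_vec n k) (G i) = cnj (G i $ k)" if "i < N" for i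
    proof -
      have "hinner (unit_vec n k) (G i) = (\<Sum>m<n. if m = k then cnj (G i $ m) else 0)"
        using D(2)[OF that] k unfolding hinner_sum[OF D(2)[OF that]]
        by (intro sum.cong) (auto simp: unit_vec_def)
      thus ?thesis using k by simp
    qed
    have "unit_vec n k $ k = vec n (\<lambda>m. \<Sum>i<N. hinner (unit_vec n k) (G i) * (F i $ m)) $ k"
      using D(3)[of "unit_vec n k"] by simp
    thus ?thesis using k hu by (simp add: mult.commute)
  qed
  have "(\<Sum>i<N. hinner (F i) (G i)) = (\<Sum>i<N. \<Sum>k<n. F i $ k * cnj (G i $ k))"
    using D(2) by (auto intro!: sum.cong simp: hinner_sum[of _ n])
  also have "\<dots> = (\<Sum>k<n. \<Sum>i<N. F i $ k * cnj (G i $ k))" by (rule sum.swap)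
  also have "\<dots> = (\<Sum>k<n. 1)" using one by simp
  finally show ?thesis by simp
qed

lemma W_id: assumes "dual_pair N n F G" "i < N"
  shows "hinner (F i) (G i) = (\<Sum>j<N. hinner (F i) (G j) * hinner (F j) (G i))"
proof -
  note D = dualD[OF assms(1)]
  have "hinner (F i) (G i) = hinner (vec n (\<lambda>k. \<Sum>j<N. hinner (F i) (G j) * (F j $ k))) (G i)"
    using D(3)[OF D(1)[OF assms(2)]] by simp
  also have "\<dots> = (\<Sum>j<N. hinner (F i) (G j) * hinner (F j) (G i))"
    by (rule hinner_vec_lin) (use D assms(2) in auto)
  finally show ?thesis .
qed

lemma E_carrier: "E_op n \<Lambda> F G \<in> carrier_mat n n" by (simp add: E_op_def)

lemma sr_nonneg: assumes "0 < n" shows "spectral_radius (E_op n \<Lambda> F G) \<ge> 0"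
  using spectral_radius_mem_max(1)[OF E_carrier[of n \<Lambda> F G] assms] by (metis imageE norm_ge_zero)

lemma sr_single: assumes "dual_pair N n F G" "i < N" "0 < n"
  shows "spectral_radius (E_op n {i} F G) = cmod (hinner (F i) (G i))"
proof (rule antisym)
  note D = dualD[OF assms(1)]
  have cj: "hinner (G i) (F i) = cnj (hinner (F i) (G i))"
    using hinner_cnj D assms(2) by blast
  from spectral_radius_mem_max(1)[OF E_carrier assms(3), of "{i}" F G]
  obtain lam where lam: "lam \<in> spectrum (E_op n {i} F G)" and sr: "spectral_radius (E_op n {i} F G) = cmod lam"
    by auto
  then obtain v where ev: "eigenvector (E_op n {i} F G) v lam"
    unfolding spectrum_def eigenvalue_def by auto
  show "spectral_radius (E_op n {i} F G) \<le> cmod (hinner (F i) (G i))"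
  proof (cases "lam = 0")
    case False
    have e1: "lam * hinner v (F i) = hinner v (F i) * hinner (G i) (F i)"
      using EV1(1)[OF ev, of i] D assms(2) by auto
    have "hinner v (F i) \<noteq> 0" using EV1(2)[OF ev _ _ _ False] D assms(2) by auto
    hence "lam = hinner (G i) (F i)" using e1 by (simp add: mult.commute)
    thus ?thesis using sr cj by simp
  qed (use sr in simp)
  show "cmod (hinner (F i) (G i)) \<le> spectral_radius (E_op n {i} F G)"
  proof (cases "hinner (F i) (G i) = 0")
    case True thus ?thesis using sr_nonneg[OF assms(3)] by simp
  next
    case False
    have "hinner (G i) (F i) \<in> spectrum (E_op n {i} F G)"
      by (rule EV2[where a="\<lambda>_. 1" and jj=i]) (use D assms(2) False cj in auto)
    from spectral_radius_mem_max(2)[OF E_carrier assms(3)] this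
    show ?thesis using cj by force
  qed
qed

lemma subsets1: "subsets_m N 1 = (\<lambda>i. {i}) ` {..<N}"
  unfolding subsets_m_def by (auto simp: card_1_singleton_iff)

lemma rFG1: assumes "dual_pair N n F G" "0 < n"
  shows "r_FG N n 1 F G = Max ((\<lambda>i. cmod (hinner (F i) (G i))) ` {..<N})"
  unfolding r_FG_def subsets1 image_image using sr_single[OF assms(1) _ assms(2)]
  by (intro arg_cong[where f=Max] image_cong) auto



lemma root_sum: fixes d :: int assumes "d \<noteq> 0" "\<bar>d\<bar> < int N"
  shows "(\<Sum>i<N. cis (2 * pi * real i * of_int d / real N)) = 0"
proof -
  have N: "N > 0" using assms by auto
  define z where "z = cis (2 * pi * of_int d / real N)"
  have zi: "cis (2 * pi * real i * of_int d / real N) = z ^ i" for i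
    unfolding z_def DeMoivre by (simp add: mult_ac)
  have "real N * (2 * pi * of_int d / real N) = 2 * pi * of_int d" using N by simp
  hence zN: "z ^ N = 1" unfolding z_def DeMoivre
    by (simp add: cis_multiple_2pi[of "of_int d"])
  have z1: "z \<noteq> 1"
  proof
    assume "z = 1"
    hence "cos (2 * pi * of_int d / real N) = 1" unfolding z_def
      by (metis Re_complex_of_real cis.sel(1) one_complex.sel(1))
    then obtain m :: int where m: "2 * pi * of_int d / real N = of_int m * 2 * pi"
      using cos_one_2pi_int by blast
    hence "of_int d = of_int m * real N" using N by (simp add: field_simps)
    hence dm: "d = m * int N" by (metis of_int_eq_iff of_int_mult of_int_of_nat_eq)
    show False
    proof (cases "m = 0")
      case True thus False using dm assms by simp
    next
      case False
      hence "\<bar>m\<bar> \<ge> 1" by linarith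
      hence "\<bar>m\<bar> * int N \<ge> 1 * int N" by (intro mult_right_mono) auto
      hence "\<bar>d\<bar> \<ge> int N" unfolding dm by (simp add: abs_mult)
      thus False using assms by simp
    qed
  qed
  have "(\<Sum>i<N. cis (2 * pi * real i * of_int d / real N)) = (\<Sum>i<N. z ^ i)" using zi by simp
  also have "\<dots> = 0" using geometric_sum[OF z1, of N] zN by simp
  finally show ?thesis .
qed

lemma harm_sum: assumes "k < N" "l < N"
  shows "(\<Sum>i<N. cis (2 * pi * real i * real k / real N) * cnj (cis (2 * pi * real i * real l / real N)))
     = (if k = l then of_nat N else 0)"
proof -
  have eq: "cis (2 * pi * real i * real k / real N) * cnj (cis (2 * pi * real i * real l / real N))
    = cis (2 * pi * real i * of_int (int k - int l) / real N)" for i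
    by (simp add: cis_cnj cis_mult) (simp add: diff_divide_distrib[symmetric] algebra_simps)
  show ?thesis
  proof (cases "k = l")
    case True thus ?thesis unfolding eq by simp
  next
    case False
    have "(\<Sum>i<N. cis (2 * pi * real i * of_int (int k - int l) / real N)) = 0"
      by (rule root_sum) (use False assms in auto)
    thus ?thesis unfolding eq using False by simp
  qed
qed



definition HF :: "nat \<Rightarrow> nat \<Rightarrow> nat \<Rightarrow> complex vec" where
  "HF N n i = vec n (\<lambda>k. cis (2 * pi * real i * real k / real N))"
definition HG :: "nat \<Rightarrow> nat \<Rightarrow> nat \<Rightarrow> complex vec" where
  "HG N n i = vec n (\<lambda>k. cis (2 * pi * real i * real k / real N) / of_nat N)"

lemma HF_car[simp]: "HF N n i \<in> carrier_vec n" and HG_car[simp]: "HG N n i \<in> carrier_vec n"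
  by (auto simp: HF_def HG_def)

lemma harm_dual: assumes "n \<le> N" "0 < N"
  shows "is_dual N n (HF N n) (HG N n)"
  unfolding is_dual_def
proof (intro conjI ballI allI impI)
  fix f :: "complex vec" assume f: "f \<in> carrier_vec n"
  show "f = vec n (\<lambda>k. \<Sum>i<N. hinner f (HG N n i) * (HF N n i $ k))"
  proof (rule eq_vecI)
    fix k assume "k < dim_vec (vec n (\<lambda>k. \<Sum>i<N. hinner f (HG N n i) * (HF N n i $ k)))"
    hence k: "k < n" by simp
    let ?c = "\<lambda>i k. cis (2 * pi * real i * real k / real N)"
    have "(\<Sum>i<N. hinner f (HG N n i) * (HF N n i $ k))
       = (\<Sum>i<N. (\<Sum>l<n. f $ l * (cnj (?c i l) / of_nat N)) * ?c i k)"
      using k by (simp add: hinner_sum[of _ n] HF_def HG_def)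
    also have "\<dots> = (\<Sum>l<n. f $ l / of_nat N * (\<Sum>i<N. ?c i k * cnj (?c i l)))"
      by (simp add: sum_distrib_left sum_distrib_right sum.swap[of _ "{..<N}"] mult_ac)
    also have "\<dots> = (\<Sum>l<n. if l = k then f $ k else 0)"
      using k assms by (intro sum.cong) (auto simp: harm_sum)
    also have "\<dots> = f $ k" using k by simp
    finally show "f $ k = vec n (\<lambda>k. \<Sum>i<N. hinner f (HG N n i) * (HF N n i $ k)) $ k"
      using k by simp
  qed (use f in simp)
qed simp

lemma harm_dual_pair: assumes "n \<le> N" "0 < N"
  shows "dual_pair N n (HF N n) (HG N n)"
  unfolding dual_pair_def
proof
  show D: "is_dual N n (HF N n) (HG N n)" by (rule harm_dual[OF assms])
  have "dual_pair N n (HF N n) (HG N n) \<Longrightarrow> True" by simp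
  have key: "(\<Sum>i<N. (cmod (hinner f (HF N n i)))\<^sup>2) = real N * hnorm2 f" if f: "f \<in> carrier_vec n" for f
  proof -
    have hfg: "hinner f (HF N n i) = of_nat N * hinner f (HG N n i)" for i
      using assms by (simp add: hinner_sum[of _ n] HF_def HG_def sum_distrib_left)
    have "complex_of_real (\<Sum>i<N. (cmod (hinner f (HF N n i)))\<^sup>2)
       = (\<Sum>i<N. hinner f (HF N n i) * cnj (hinner f (HF N n i)))"
      unfolding of_real_sum by (intro sum.cong refl) (rule complex_norm_square)
    also have "\<dots> = of_nat N * (\<Sum>i<N. hinner f (HG N n i) * hinner (HF N n i) f)"
      using f by (simp add: hfg sum_distrib_left mult_ac hinner_cnj[of "HF N n _" n f])
    also have "(\<Sum>i<N. hinner f (HG N n i) * hinner (HF N n i) f)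
       = hinner (vec n (\<lambda>k. \<Sum>i<N. hinner f (HG N n i) * (HF N n i $ k))) f"
      by (rule hinner_vec_lin[symmetric]) (use f in auto)
    also have "vec n (\<lambda>k. \<Sum>i<N. hinner f (HG N n i) * (HF N n i $ k)) = f"
      using D f unfolding is_dual_def by auto
    finally have "complex_of_real (\<Sum>i<N. (cmod (hinner f (HF N n i)))\<^sup>2) = of_nat N * hinner f f" .
    hence "Re (complex_of_real (\<Sum>i<N. (cmod (hinner f (HF N n i)))\<^sup>2)) = Re (of_nat N * hinner f f)"
      by simp
    thus ?thesis by (simp add: hnorm2_def)
  qed
  show "is_frame N n (HF N n)"
    unfolding is_frame_def using assms key by (intro conjI exI[of _ "real N"]) auto
qed

lemma harm_unif: "hinner (HF N n i) (HG N n i) = of_nat n / of_nat N"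
proof -
  have "hinner (HF N n i) (HG N n i) = (\<Sum>k<n. 1 / of_nat N)"
    by (simp add: hinner_sum[of _ n] HF_def HG_def cis_cnj cis_mult)
  thus ?thesis by simp
qed



lemma rFG1_ge: assumes "dual_pair N n F G" "0 < n" "n < N"
  shows "r_FG N n 1 F G \<ge> real n / real N"
proof (rule ccontr)
  assume "\<not> ?thesis"
  hence lt: "cmod (hinner (F i) (G i)) < real n / real N" if "i < N" for i
    unfolding rFG1[OF assms(1,2)] using that by (meson Max_ge finite_imageI finite_lessThan image_eqI lessThan_iff not_le order.strict_trans1)
  have "(\<Sum>i<N. Re (hinner (F i) (G i))) < (\<Sum>i<N. real n / real N)"
    using assms(3) by (intro sum_strict_mono) (auto intro: le_less_trans[OF complex_Re_le_cmod lt])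
  also have "\<dots> = real n" using assms by simp
  also have "real n = (\<Sum>i<N. Re (hinner (F i) (G i)))"
    using arg_cong[OF trace_id[OF assms(1)], of Re] by (simp add: Re_sum)
  finally show False by simp
qed

lemma rFG1_eq_imp: assumes "dual_pair N n F G" "0 < n" "n < N" "r_FG N n 1 F G = real n / real N"
  shows "\<And>i. i < N \<Longrightarrow> hinner (F i) (G i) = of_nat n / of_nat N"
proof -
  let ?c = "real n / real N"
  have le: "cmod (hinner (F i) (G i)) \<le> ?c" if "i < N" for i
  proof -
    have "cmod (hinner (F i) (G i)) \<le> Max ((\<lambda>i. cmod (hinner (F i) (G i))) ` {..<N})"
      by (rule Max_ge) (use that in auto)
    thus ?thesis using assms(4) unfolding rFG1[OF assms(1,2)] by simp
  qed
  have sumRe: "(\<Sum>i<N. Re (hinner (F i) (G i))) = real n"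
    using arg_cong[OF trace_id[OF assms(1)], of Re] by (simp add: Re_sum)
  have "(\<Sum>i<N. ?c - Re (hinner (F i) (G i))) = real N * ?c - (\<Sum>i<N. Re (hinner (F i) (G i)))"
    by (simp add: sum_subtractf)
  also have "\<dots> = 0" using sumRe assms(3) by simp
  finally have s0: "(\<Sum>i<N. ?c - Re (hinner (F i) (G i))) = 0" .
  have nn: "\<And>i. i\<in>{..<N} \<Longrightarrow> 0 \<le> ?c - Re (hinner (F i) (G i))"
  proof -
    fix i assume "i \<in> {..<N}"
    hence "Re (hinner (F i) (G i)) \<le> ?c" using le complex_Re_le_cmod[of "hinner (F i) (G i)"] by force
    thus "0 \<le> ?c - Re (hinner (F i) (G i))" by simp
  qed
  have Re_eq: "Re (hinner (F i) (G i)) = ?c" if "i < N" for i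
  proof -
    have "?c - Re (hinner (F i) (G i)) = 0"
      using iffD1[OF sum_nonneg_eq_0_iff[OF finite_lessThan nn] s0] that by blast
    thus ?thesis by simp
  qed
  fix i assume i: "i < N"
  have "(cmod (hinner (F i) (G i)))\<^sup>2 \<le> ?c\<^sup>2" using le[OF i] by (simp add: power_mono)
  hence "(Im (hinner (F i) (G i)))\<^sup>2 \<le> 0" unfolding cmod_power2 Re_eq[OF i] by simp
  hence "Im (hinner (F i) (G i)) = 0" by simp
  thus "hinner (F i) (G i) = of_nat n / of_nat N" using Re_eq[OF i]
    by (simp add: complex_eq_iff)
qed

lemma unif1_imp: assumes "dual_pair N n F G" "uniform1 N F G" "0 < N"
  shows "\<And>i. i < N \<Longrightarrow> hinner (F i) (G i) = of_nat n / of_nat N"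
proof -
  obtain c where c: "\<And>i. i < N \<Longrightarrow> hinner (F i) (G i) = c" using assms(2) unfolding uniform1_def by auto
  have "of_nat N * c = of_nat n" using trace_id[OF assms(1)] c by simp
  hence "c = of_nat n / of_nat N" using assms(3) by (simp add: field_simps)
  thus "\<And>i. i < N \<Longrightarrow> hinner (F i) (G i) = of_nat n / of_nat N" using c by simp
qed

lemma rFG1_unif: assumes "dual_pair N n F G" "0 < n" "n < N" "\<And>i. i < N \<Longrightarrow> hinner (F i) (G i) = of_nat n / of_nat N"
  shows "r_FG N n 1 F G = real n / real N"
proof -
  have "(\<lambda>i. cmod (hinner (F i) (G i))) ` {..<N} = {real n / real N}"
    using assms(3,4) by (auto simp: norm_divide intro!: image_eqI[of _ _ 0])
  thus ?thesis unfolding rFG1[OF assms(1,2)] by simp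
qed

lemma r1_val: assumes "0 < n" "n < N" shows "r1 N n = real n / real N"
  unfolding r1_def
proof (rule cInf_eq_minimum)
  show "real n / real N \<in> {r_FG N n 1 F G |F G. dual_pair N n F G}"
    using harm_dual_pair[of n N] rFG1_unif[of N n "HF N n" "HG N n"] harm_unif assms by force
next
  fix x assume "x \<in> {r_FG N n 1 F G |F G. dual_pair N n F G}"
  then obtain F G where "dual_pair N n F G" "x = r_FG N n 1 F G" by blast
  thus "real n / real N \<le> x" using rFG1_ge[OF _ assms] by simp
qed

lemma R1_iff: assumes "0 < n" "n < N"
  shows "(F, G) \<in> R1 N n \<longleftrightarrow> dual_pair N n F G \<and> (\<forall>i<N. hinner (F i) (G i) = of_nat n / of_nat N)"
proof -
  have "(F, G) \<in> R1 N n \<longleftrightarrow> dual_pair N n F G \<and> r_FG N n 1 F G = real n / real N"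
    unfolding R1_def r1_val[OF assms] by simp
  also have "\<dots> \<longleftrightarrow> dual_pair N n F G \<and> (\<forall>i<N. hinner (F i) (G i) = of_nat n / of_nat N)"
  proof (intro iffI conjI allI impI)
    assume "dual_pair N n F G \<and> r_FG N n 1 F G = real n / real N"
    thus "\<And>i. i < N \<Longrightarrow> hinner (F i) (G i) = of_nat n / of_nat N" using rFG1_eq_imp[OF _ assms] by blast
  next
    assume a: "dual_pair N n F G \<and> (\<forall>i<N. hinner (F i) (G i) = of_nat n / of_nat N)"
    thus "r_FG N n 1 F G = real n / real N" using rFG1_unif[OF _ assms] by blast
  qed simp_all
  finally show ?thesis .
qed

lemma harm_R1: assumes "0 < n" "n < N" shows "(HF N n, HG N n) \<in> R1 N n"
  using R1_iff[OF assms] harm_dual_pair[of n N] harm_unif assms by simp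



lemma NL1: assumes "Re u \<ge> a" "a \<ge> 0" "cr \<ge> 0"
  shows "cmod (complex_of_real cr + csqrt u) \<ge> cr + sqrt a"
proof -
  define s where "s = csqrt u"
  have x0: "Re s \<ge> 0" unfolding s_def by (rule Re_csqrt)
  have "u = s^2" unfolding s_def by simp
  hence "Re u = (Re s)^2 - (Im s)^2" by (simp add: power2_eq_square)
  hence "(Re s)^2 \<ge> a" using assms(1) by (smt (verit) zero_le_power2)
  hence "Re s \<ge> sqrt a" using x0 by (metis real_le_lsqrt)
  also have "cr + Re s \<le> cmod (complex_of_real cr + s)"
    using complex_Re_le_cmod[of "complex_of_real cr + s"] by simp
  ultimately show ?thesis unfolding s_def by linarith
qed

lemma NL2: assumes "cmod (complex_of_real cr + csqrt u) \<le> cr + sqrt a" "a \<ge> 0" "cr \<ge> 0"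
  shows "Re u \<le> a" "Re u = a \<Longrightarrow> u = complex_of_real a"
proof -
  define s where "s = csqrt u"
  have x0: "Re s \<ge> 0" unfolding s_def by (rule Re_csqrt)
  have us: "u = s^2" unfolding s_def by simp
  hence Reu: "Re u = (Re s)^2 - (Im s)^2" and Imu: "Im u = 2 * Re s * Im s" by (simp_all add: power2_eq_square)
  have "cr + Re s \<le> cmod (complex_of_real cr + s)"
    using complex_Re_le_cmod[of "complex_of_real cr + s"] by simp
  moreover have "cmod (complex_of_real cr + s) \<le> cr + sqrt a" unfolding s_def by (rule assms(1))
  ultimately have xa: "Re s \<le> sqrt a" by linarith
  hence xa2: "(Re s)^2 \<le> a" using x0 assms(2) by (metis real_sqrt_le_iff real_sqrt_unique sqrt_le_D)
  show "Re u \<le> a" using Reu xa2 by (smt (verit) zero_le_power2)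
  assume "Re u = a"
  hence "(Im s)^2 \<le> 0" using Reu xa2 by linarith
  hence "Im s = 0" by simp
  hence "Im u = 0" using Imu by simp
  thus "u = complex_of_real a" using \<open>Re u = a\<close> by (simp add: complex_eq_iff)
qed

lemma NL3: assumes "(lam - complex_of_real cr)^2 = complex_of_real a" "a \<ge> 0" "cr \<ge> 0"
  shows "cmod lam \<le> cr + sqrt a"
proof -
  have "(cmod (lam - complex_of_real cr))^2 = a"
    using arg_cong[OF assms(1), of cmod] assms(2) by (simp add: norm_power)
  hence "cmod (lam - complex_of_real cr) = sqrt a" by (metis norm_ge_zero real_sqrt_unique)
  moreover have "cmod lam \<le> cmod (complex_of_real cr) + cmod (lam - complex_of_real cr)"
    by (metis add.commute diff_add_cancel norm_triangle_ineq)
  ultimately show ?thesis using assms(3) by simp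
qed



locale pr =
  fixes N n F G i j
  assumes dp: "dual_pair N n F G"
    and cc: "\<And>l. l < N \<Longrightarrow> hinner (F l) (G l) = of_nat n / of_nat N"
    and ij: "i < N" "j < N" "i \<noteq> j" and nN: "0 < n" "n < N"
begin

abbreviation "cr \<equiv> real n / real N"
abbreviation "c0 \<equiv> complex_of_real (real n / real N)"
abbreviation "w \<equiv> hinner (F i) (G j) * hinner (F j) (G i)"

lemma D: "\<And>l. l < N \<Longrightarrow> F l \<in> carrier_vec n" "\<And>l. l < N \<Longrightarrow> G l \<in> carrier_vec n"
  using dualD[OF dp] by auto

lemma gf: "l < N \<Longrightarrow> hinner (G l) (F l) = c0"
  using hinner_cnj[OF D(2) D(1), of l l] cc[of l] by simp

lemma pp: "hinner (G j) (F i) * hinner (G i) (F j) = cnj w"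
  using hinner_cnj[OF D(2)[OF ij(2)] D(1)[OF ij(1)]] hinner_cnj[OF D(2)[OF ij(1)] D(1)[OF ij(2)]]
  by simp

lemma cr_pos: "cr > 0" using nN by simp

lemma FC: "\<And>l. l \<in> {i,j} \<Longrightarrow> F l \<in> carrier_vec n" and GC: "\<And>l. l \<in> {i,j} \<Longrightarrow> G l \<in> carrier_vec n"
  using D ij by auto

lemma pair_spec: "c0 + csqrt (cnj w) \<in> spectrum (E_op n {i,j} F G)"
proof -
  define s where "s = csqrt (cnj w)"
  define p where "p = hinner (G j) (F i)"
  define q where "q = hinner (G i) (F j)"
  have s2: "s * s = p * q" unfolding s_def p_def q_def pp[symmetric] by (metis power2_csqrt power2_eq_square)
  have "Re s \<ge> 0" unfolding s_def by (rule Re_csqrt)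
  hence Rp: "Re (c0 + s) > 0" using cr_pos by simp
  have l0: "c0 + s \<noteq> 0"
  proof
    assume "c0 + s = 0"
    hence "Re (c0 + s) = 0" by (simp only: zero_complex.sel)
    thus False using Rp by linarith
  qed
  have hs: "\<And>f. (\<Sum>m\<in>{i,j}. f m) = (f i + f j :: complex)" using ij(3) by simp
  have gi: "hinner (G i) (F i) = c0" and gj: "hinner (G j) (F j) = c0" using gf ij by auto
  have "c0 + s \<in> spectrum (E_op n {i,j} F G)"
  proof (cases "p = 0")
    case False
    have eqs: "(\<Sum>m\<in>{i,j}. (if m = i then p else s) * hinner (G m) (F l)) = (c0 + s) * (if l = i then p else s)"
      if l: "l \<in> {i,j}" for l
      proof (cases "l = i")
        case True
        have "(\<Sum>m\<in>{i,j}. (if m = i then p else s) * hinner (G m) (F l)) = p * c0 + s * p"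
          unfolding hs using True ij(3) gi by (simp add: p_def)
        also have "\<dots> = (c0 + s) * (if l = i then p else s)" using True by (simp add: algebra_simps)
        finally show ?thesis .
      next
        case False
        hence lj: "l = j" using l by simp
        have "(\<Sum>m\<in>{i,j}. (if m = i then p else s) * hinner (G m) (F l)) = p * q + s * c0"
          unfolding hs using lj ij(3) gj by (simp add: q_def)
        also have "\<dots> = (c0 + s) * (if l = i then p else s)" using False s2 by (simp add: algebra_simps)
        finally show ?thesis .
      qed
    show ?thesis using EV2[OF FC GC _ l0 eqs, where jj=i] False ij by auto
  next
    case True
    hence s0: "s = 0" using s2 by simp
    have eqs: "(\<Sum>m\<in>{i,j}. (if m = i then 0 else 1) * hinner (G m) (F l)) = (c0 + s) * (if l = i then 0 else 1)"
      if l: "l \<in> {i,j}" for l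
      proof (cases "l = i")
        case True
        thus ?thesis unfolding hs using ij(3) \<open>p = 0\<close> by (simp add: p_def)
      next
        case False
        hence lj: "l = j" using l by simp
        thus ?thesis unfolding hs using ij(3) gj s0 by simp
      qed
    show ?thesis using EV2[OF FC GC _ l0 eqs, where jj=j] ij by auto
  qed
  thus ?thesis unfolding s_def .
qed

lemma pair_char: assumes "lam \<in> spectrum (E_op n {i,j} F G)" "lam \<noteq> 0"
  shows "(lam - c0)^2 = cnj w"
proof -
  obtain v where ev: "eigenvector (E_op n {i,j} F G) v lam"
    using assms(1) unfolding spectrum_def eigenvalue_def by auto
  define x where "x = hinner v (F i)"
  define y where "y = hinner v (F j)"
  define p where "p = hinner (G j) (F i)"
  define q where "q = hinner (G i) (F j)"
  have e1: "lam * x = x * c0 + y * p"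
    using EV1(1)[OF ev FC GC _ D(1)[OF ij(1)]] ij gf[OF ij(1)] unfolding x_def y_def p_def by simp
  have e2: "lam * y = x * q + y * c0"
    using EV1(1)[OF ev FC GC _ D(1)[OF ij(2)]] ij gf[OF ij(2)] unfolding x_def y_def q_def by simp
  have nz: "x \<noteq> 0 \<or> y \<noteq> 0" using EV1(2)[OF ev FC GC _ assms(2)] unfolding x_def y_def by auto
  have a1: "(lam - c0) * x = y * p" using e1 by (simp add: algebra_simps)
  have a2: "(lam - c0) * y = x * q" using e2 by (simp add: algebra_simps)
  have "(lam - c0)^2 * x = (lam - c0) * ((lam - c0) * x)" by (simp add: power2_eq_square)
  also have "\<dots> = ((lam - c0) * y) * p" unfolding a1 by simp
  also have "\<dots> = (p * q) * x" unfolding a2 by simp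
  finally have X: "(lam - c0)^2 * x = (p * q) * x" .
  have "(lam - c0)^2 * y = (lam - c0) * ((lam - c0) * y)" by (simp add: power2_eq_square)
  also have "\<dots> = ((lam - c0) * x) * q" unfolding a2 by simp
  also have "\<dots> = (p * q) * y" unfolding a1 by simp
  finally have Y: "(lam - c0)^2 * y = (p * q) * y" .
  have "(lam - c0)^2 = p * q" using X Y nz by auto
  thus ?thesis unfolding p_def q_def pp .
qed

end



definition aa :: "nat \<Rightarrow> nat \<Rightarrow> real" where
  "aa N n = real n * (real N - real n) / ((real N)\<^sup>2 * (real N - 1))"

lemma aa_nonneg: assumes "0 < n" "n < N" shows "aa N n \<ge> 0"
proof -
  have "real N - 1 > 0" using assms by simp
  thus ?thesis unfolding aa_def using assms by (intro divide_nonneg_pos mult_nonneg_nonneg mult_pos_pos) auto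
qed

lemma offdiag_sum:
  assumes dp: "dual_pair N n F G" and cc: "\<And>l. l < N \<Longrightarrow> hinner (F l) (G l) = of_nat n / of_nat N"
    and nN: "0 < n" "n < N"
  shows "(\<Sum>i<N. \<Sum>j\<in>{..<N}-{i}. hinner (F i) (G j) * hinner (F j) (G i))
     = complex_of_real (real N * (real N - 1) * aa N n)"
proof -
  have "(\<Sum>i<N. \<Sum>j\<in>{..<N}-{i}. hinner (F i) (G j) * hinner (F j) (G i))
      = (\<Sum>i<N. hinner (F i) (G i) - hinner (F i) (G i) * hinner (F i) (G i))"
  proof (rule sum.cong[OF refl])
    fix i assume i: "i \<in> {..<N}"
    have "hinner (F i) (G i) = (\<Sum>j<N. hinner (F i) (G j) * hinner (F j) (G i))"
      using W_id[OF dp] i by simp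
    also have "\<dots> = hinner (F i) (G i) * hinner (F i) (G i) + (\<Sum>j\<in>{..<N}-{i}. hinner (F i) (G j) * hinner (F j) (G i))"
      using i by (simp add: sum.remove)
    finally show "(\<Sum>j\<in>{..<N}-{i}. hinner (F i) (G j) * hinner (F j) (G i)) = hinner (F i) (G i) - hinner (F i) (G i) * hinner (F i) (G i)"
      by (simp add: algebra_simps)
  qed
  also have "\<dots> = (\<Sum>i<N. of_nat n / of_nat N - (of_nat n / of_nat N)^2)"
    using cc by (simp add: power2_eq_square)
  also have "\<dots> = of_nat N * (of_nat n / of_nat N - (of_nat n / of_nat N)^2)" by simp
  also have "\<dots> = complex_of_real (real N * (real N - 1) * aa N n)"
  proof -
    have N1: "real N - 1 \<noteq> 0" using nN by simp
    have "real N * (real n / real N - (real n / real N)^2) = real N * (real N - 1) * aa N n"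
      unfolding aa_def using nN N1 by (simp add: field_simps power2_eq_square)
    hence "complex_of_real (real N * (real n / real N - (real n / real N)^2)) = complex_of_real (real N * (real N - 1) * aa N n)"
      by (rule arg_cong)
    thus ?thesis by (simp only: of_real_mult of_real_diff of_real_divide of_real_of_nat_eq of_real_power)
  qed
  finally show ?thesis .
qed

lemma subsets_fin: "finite (subsets_m N m)"
  unfolding subsets_m_def by (rule finite_subset[of _ "Pow {0..<N}"]) auto

lemma pair_in: "i < N \<Longrightarrow> j < N \<Longrightarrow> i \<noteq> j \<Longrightarrow> {i,j} \<in> subsets_m N 2"
  unfolding subsets_m_def by auto

lemma subsets2: "\<Lambda> \<in> subsets_m N 2 \<Longrightarrow> \<exists>i j. i < N \<and> j < N \<and> i \<noteq> j \<and> \<Lambda> = {i,j}"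
  unfolding subsets_m_def by (auto simp: card_2_iff) blast

lemma sr_le_rFG: "i < N \<Longrightarrow> j < N \<Longrightarrow> i \<noteq> j \<Longrightarrow> spectral_radius (E_op n {i,j} F G) \<le> r_FG N n 2 F G"
  unfolding r_FG_def by (rule Max_ge) (auto intro: subsets_fin pair_in)

lemma sr_ge_pair: assumes "pr N n F G i j" "Re (hinner (F i) (G j) * hinner (F j) (G i)) \<ge> aa N n"
  shows "spectral_radius (E_op n {i,j} F G) \<ge> real n / real N + sqrt (aa N n)"
proof -
  interpret pr N n F G i j by (rule assms(1))
  have "cmod (c0 + csqrt (cnj w)) \<ge> cr + sqrt (aa N n)"
    by (rule NL1) (use assms(2) aa_nonneg[OF nN] nN in auto)
  also have "cmod (c0 + csqrt (cnj w)) \<le> spectral_radius (E_op n {i,j} F G)"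
    using spectral_radius_mem_max(2)[OF E_carrier nN(1)] pair_spec by blast
  finally show ?thesis .
qed

lemma r2_lower: assumes "(F, G) \<in> R1 N n" "0 < n" "n < N"
  shows "r_FG N n 2 F G \<ge> real n / real N + sqrt (aa N n)"
proof -
  have dp: "dual_pair N n F G" and cc: "\<And>l. l < N \<Longrightarrow> hinner (F l) (G l) = of_nat n / of_nat N"
    using R1_iff[OF assms(2,3)] assms(1) by auto
  have "\<exists>i j. i < N \<and> j < N \<and> i \<noteq> j \<and> Re (hinner (F i) (G j) * hinner (F j) (G i)) \<ge> aa N n"
  proof (rule ccontr)
    assume "\<not> ?thesis"
    hence lt: "\<And>i j. i < N \<Longrightarrow> j < N \<Longrightarrow> i \<noteq> j \<Longrightarrow> Re (hinner (F i) (G j) * hinner (F j) (G i)) < aa N n"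
      by force
    have ne: "{..<N} - {i} \<noteq> {}" if "i < N" for i
    proof -
      have "(if i = 0 then 1 else 0) \<in> {..<N} - {i}" using assms(2,3) that by auto
      thus ?thesis by blast
    qed
    define wr where "wr i j = Re (hinner (F i) (G j) * hinner (F j) (G i))" for i j
    have inner: "(\<Sum>j\<in>{..<N}-{i}. wr i j) < (\<Sum>j\<in>{..<N}-{i}. aa N n)" if i: "i \<in> {..<N}" for i
    proof (rule sum_strict_mono)
      show "{..<N} - {i} \<noteq> {}" using ne i by simp
      fix j assume "j \<in> {..<N} - {i}"
      thus "wr i j < aa N n" unfolding wr_def using lt i by auto
    qed simp
    have "(\<Sum>i<N. \<Sum>j\<in>{..<N}-{i}. wr i j) < (\<Sum>i<N. \<Sum>j\<in>{..<N}-{i}. aa N n)"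
      by (rule sum_strict_mono[OF _ _ inner]) (use assms(3) in auto)
    hence "(\<Sum>i<N. \<Sum>j\<in>{..<N}-{i}. Re (hinner (F i) (G j) * hinner (F j) (G i)))
        < (\<Sum>i<N. \<Sum>j\<in>{..<N}-{i}. aa N n)" unfolding wr_def .
    also have "\<dots> = real N * (real N - 1) * aa N n"
      using assms(3) by (simp add: card_Diff_singleton of_nat_diff)
    also have "\<dots> = (\<Sum>i<N. \<Sum>j\<in>{..<N}-{i}. Re (hinner (F i) (G j) * hinner (F j) (G i)))"
      using arg_cong[OF offdiag_sum[OF dp cc assms(2,3)], of Re] by (simp add: Re_sum)
    finally show False by simp
  qed
  then obtain i j where ij: "i < N" "j < N" "i \<noteq> j" "Re (hinner (F i) (G j) * hinner (F j) (G i)) \<ge> aa N n"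
    by blast
  have "pr N n F G i j" using dp cc ij assms(2,3) by unfold_locales auto
  from sr_ge_pair[OF this ij(4)] sr_le_rFG[OF ij(1-3), of n F G] show ?thesis by simp
qed



lemma bnd_nonneg: "0 < n \<Longrightarrow> n < N \<Longrightarrow> 0 \<le> real n / real N + sqrt (aa N n)"
  using aa_nonneg[of n N] by simp

lemma unif2_props: assumes dp: "dual_pair N n F G" and u2: "uniform2 N F G" and nN: "0 < n" "n < N"
  shows "(F, G) \<in> R1 N n" "r_FG N n 2 F G = real n / real N + sqrt (aa N n)"
proof -
  have cc: "\<And>l. l < N \<Longrightarrow> hinner (F l) (G l) = of_nat n / of_nat N"
    using unif1_imp[OF dp] u2 nN unfolding uniform2_def by auto
  show R1: "(F, G) \<in> R1 N n" using R1_iff[OF nN] dp cc by auto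
  obtain d where d: "\<And>i j. i < N \<Longrightarrow> j < N \<Longrightarrow> i \<noteq> j \<Longrightarrow> hinner (F i) (G j) * hinner (F j) (G i) = d"
    using u2 unfolding uniform2_def by blast
  have "(\<Sum>i<N. \<Sum>j\<in>{..<N}-{i}. hinner (F i) (G j) * hinner (F j) (G i)) = (\<Sum>i<N. \<Sum>j\<in>{..<N}-{i}. d)"
    using d by (intro sum.cong) auto
  also have "\<dots> = of_nat N * (of_nat N - 1) * d"
    using nN by (simp add: card_Diff_singleton of_nat_diff)
  finally have c1: "(\<Sum>i<N. \<Sum>j\<in>{..<N}-{i}. hinner (F i) (G j) * hinner (F j) (G i)) = of_nat N * (of_nat N - 1) * d" .
  have "of_nat N * (of_nat N - 1) * d = complex_of_real (real N * (real N - 1) * aa N n)"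
    using c1 offdiag_sum[OF dp cc nN] by metis
  hence e: "(of_nat N * (of_nat N - 1)) * d = (of_nat N * (of_nat N - 1)) * complex_of_real (aa N n)"
    by (simp only: of_real_mult of_real_diff of_real_of_nat_eq of_real_1)
  moreover have "of_nat N * (of_nat N - 1) \<noteq> (0::complex)" using nN by simp
  ultimately have dd: "d = complex_of_real (aa N n)"
    by (meson mult_left_cancel)
  let ?b = "real n / real N + sqrt (aa N n)"
  have sr: "spectral_radius (E_op n \<Lambda> F G) = ?b" if L: "\<Lambda> \<in> subsets_m N 2" for \<Lambda>
  proof -
    obtain i j where ijo: "i < N" "j < N" "i \<noteq> j" "\<Lambda> = {i,j}" using subsets2[OF L] by blast
    have P: "pr N n F G i j" using dp cc ijo nN by unfold_locales auto
    interpret pr N n F G i j by (rule P)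
    have wa: "w = complex_of_real (aa N n)" using d[OF ijo(1-3)] dd by simp
    show ?thesis unfolding ijo(4)
    proof (rule antisym)
      show "?b \<le> spectral_radius (E_op n {i,j} F G)"
        by (rule sr_ge_pair[OF P]) (simp add: wa)
      obtain lam where lam: "lam \<in> spectrum (E_op n {i,j} F G)" and srl: "spectral_radius (E_op n {i,j} F G) = cmod lam"
        using spectral_radius_mem_max(1)[OF E_carrier nN(1), of "{i,j}" F G] by auto
      show "spectral_radius (E_op n {i,j} F G) \<le> ?b"
      proof (cases "lam = 0")
        case True thus ?thesis using srl bnd_nonneg[OF nN] by simp
      next
        case False
        have "(lam - c0)^2 = complex_of_real (aa N n)" using pair_char[OF lam False] wa by simp
        from NL3[OF this aa_nonneg[OF nN]] srl show ?thesis by simp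
      qed
    qed
  qed
  have "{0,1} \<in> subsets_m N 2" using nN by (intro pair_in) auto
  hence "(\<lambda>\<Lambda>. spectral_radius (E_op n \<Lambda> F G)) ` subsets_m N 2 = {?b}" using sr by force
  thus "r_FG N n 2 F G = ?b" unfolding r_FG_def by simp
qed

lemma R2_dir: assumes R1: "(F, G) \<in> R1 N n" and r: "r_FG N n 2 F G = real n / real N + sqrt (aa N n)"
  and nN: "0 < n" "n < N"
  shows "uniform2 N F G"
proof -
  have dp: "dual_pair N n F G" and cc: "\<And>l. l < N \<Longrightarrow> hinner (F l) (G l) = of_nat n / of_nat N"
    using R1_iff[OF nN] R1 by auto
  define wr where "wr i j = Re (hinner (F i) (G j) * hinner (F j) (G i))" for i j
  have le: "wr i j \<le> aa N n" and eq: "wr i j = aa N n \<Longrightarrow> hinner (F i) (G j) * hinner (F j) (G i) = complex_of_real (aa N n)"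
    if ijo: "i < N" "j < N" "i \<noteq> j" for i j
  proof -
    have P: "pr N n F G i j" using dp cc ijo nN by unfold_locales auto
    interpret pr N n F G i j by (rule P)
    have "cmod (c0 + csqrt (cnj w)) \<le> spectral_radius (E_op n {i,j} F G)"
      using spectral_radius_mem_max(2)[OF E_carrier nN(1)] pair_spec by blast
    also have "\<dots> \<le> r_FG N n 2 F G" by (rule sr_le_rFG[OF ijo])
    finally have c: "cmod (c0 + csqrt (cnj w)) \<le> real n / real N + sqrt (aa N n)" using r by simp
    note n2 = NL2[OF c aa_nonneg[OF nN]]
    show "wr i j \<le> aa N n" using n2(1) unfolding wr_def by simp
    assume "wr i j = aa N n"
    hence "cnj w = complex_of_real (aa N n)" using n2(2) unfolding wr_def by simp
    thus "w = complex_of_real (aa N n)" by (metis complex_cnj_cnj complex_cnj_complex_of_real)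
  qed
  have s: "(\<Sum>i<N. \<Sum>j\<in>{..<N}-{i}. wr i j) = real N * (real N - 1) * aa N n"
    using arg_cong[OF offdiag_sum[OF dp cc nN], of Re] unfolding wr_def by (simp add: Re_sum)
  have "(\<Sum>i<N. \<Sum>j\<in>{..<N}-{i}. aa N n - wr i j) = real N * (real N - 1) * aa N n - (\<Sum>i<N. \<Sum>j\<in>{..<N}-{i}. wr i j)"
    using nN by (simp add: sum_subtractf card_Diff_singleton of_nat_diff)
  also have "\<dots> = 0" using s by simp
  finally have s0: "(\<Sum>i<N. \<Sum>j\<in>{..<N}-{i}. aa N n - wr i j) = 0" .
  have nn1: "\<And>i j. i \<in> {..<N} \<Longrightarrow> j \<in> {..<N}-{i} \<Longrightarrow> 0 \<le> aa N n - wr i j" using le by auto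
  have nn2: "\<And>i. i \<in> {..<N} \<Longrightarrow> 0 \<le> (\<Sum>j\<in>{..<N}-{i}. aa N n - wr i j)"
    using nn1 by (intro sum_nonneg) auto
  have z1: "(\<Sum>j\<in>{..<N}-{i}. aa N n - wr i j) = 0" if "i < N" for i
    using iffD1[OF sum_nonneg_eq_0_iff[OF finite_lessThan nn2] s0] that by blast
  have weq: "hinner (F i) (G j) * hinner (F j) (G i) = complex_of_real (aa N n)"
    if ij: "i < N" "j < N" "i \<noteq> j" for i j
  proof -
    have "aa N n - wr i j = 0"
      using iffD1[OF sum_nonneg_eq_0_iff[of "{..<N}-{i}" "\<lambda>j. aa N n - wr i j"] z1[OF ij(1)]] nn1 ij by auto
    thus ?thesis using eq[OF ij] by simp
  qed
  show ?thesis unfolding uniform2_def uniform1_def using cc weq by blast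
qed

theorem theorem4p4:
  fixes N n :: nat
  assumes "0 < n" and "N > n"
  shows "r2 N n \<ge> real n / real N + sqrt (real n * (real N - real n) / ((real N)\<^sup>2 * (real N - 1)))
    \<and> ((\<exists>F G. dual_pair N n F G \<and> uniform2 N F G) \<longrightarrow>
         r2 N n = real n / real N + sqrt (real n * (real N - real n) / ((real N)\<^sup>2 * (real N - 1)))
         \<and> (\<forall>F G. dual_pair N n F G \<longrightarrow> ((F, G) \<in> R2 N n \<longleftrightarrow> uniform2 N F G)))"
proof -
  note nN = assms
  let ?b = "real n / real N + sqrt (aa N n)"
  have beq: "real n / real N + sqrt (real n * (real N - real n) / ((real N)\<^sup>2 * (real N - 1))) = ?b"
    unfolding aa_def ..
  let ?S = "{r_FG N n 2 F G | F G. (F, G) \<in> R1 N n}"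
  have ne: "?S \<noteq> {}" using harm_R1[OF nN] by blast
  have lb: "\<And>x. x \<in> ?S \<Longrightarrow> ?b \<le> x" using r2_lower[OF _ nN] by blast
  have part1: "?b \<le> r2 N n" unfolding r2_def by (rule cInf_greatest[OF ne lb])
  have part2: "r2 N n = ?b \<and> (\<forall>F G. dual_pair N n F G \<longrightarrow> ((F, G) \<in> R2 N n \<longleftrightarrow> uniform2 N F G))"
    if ex: "\<exists>F G. dual_pair N n F G \<and> uniform2 N F G"
  proof -
    obtain F0 G0 where F0: "dual_pair N n F0 G0" "uniform2 N F0 G0" using ex by blast
    have "?b \<in> ?S" using unif2_props[OF F0 nN] by force
    hence r2: "r2 N n = ?b" unfolding r2_def by (rule cInf_eq_minimum) (rule lb)
    show ?thesis
    proof (intro conjI allI impI)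
      fix F G assume dp: "dual_pair N n F G"
      show "(F, G) \<in> R2 N n \<longleftrightarrow> uniform2 N F G"
      proof
        assume "(F, G) \<in> R2 N n"
        hence "(F, G) \<in> R1 N n" "r_FG N n 2 F G = ?b" unfolding R2_def r2 by auto
        thus "uniform2 N F G" using R2_dir nN by blast
      next
        assume "uniform2 N F G"
        from unif2_props[OF dp this nN] show "(F, G) \<in> R2 N n" unfolding R2_def r2 by auto
      qed
    qed (rule r2)
  qed
  show ?thesis unfolding beq using part1 part2 by blast
qed


end
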